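(* Let $T$ be a caterpillar tree such that every cutpoint of $T$ has degree at least three. Then $\dim R/I(L(T))=s$, where $s$ is the number of cutpoints of $T$, equivalently the number of maximal cliques of $L(T)$.
   Context: A caterpillar tree is a tree in which removing all vertices of degree $1$ leaves a chordless path. A cutpoint is a vertex whose removal disconnects the graph. The line graph $L(T)$ has vertex set $E(T)$, two vertices adjacent iff the corresponding edges share a vertex. $R=\Bbbk[e_{uv}:\{u,v\}\in E(T)]$ for a field $\Bbbk$, $I(L(T))=\langle e_fe_g: f\neq g\in E(T),\ f\cap g\neq\emptyset\rangle$, and $\dim$ is Krull dimension. *)

theory Defs
  imports Main "HOL-Library.Poly_Mapping" "HOL-Library.Extended_Nat"
begin

definition simple_graph :: "'v set \<Rightarrow> 'v set set \<Rightarrow> bool" where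
  "simple_graph V E \<longleftrightarrow> (\<forall>e\<in>E. \<exists>u v. e = {u, v} \<and> u \<noteq> v \<and> u \<in> V \<and> v \<in> V)"

definition is_walk :: "'v set \<Rightarrow> 'v set set \<Rightarrow> 'v list \<Rightarrow> bool" where
  "is_walk V E p \<longleftrightarrow> p \<noteq> [] \<and> set p \<subseteq> V \<and>
     (\<forall>i. Suc i < length p \<longrightarrow> {p ! i, p ! Suc i} \<in> E)"

definition connected_graph :: "'v set \<Rightarrow> 'v set set \<Rightarrow> bool" where
  "connected_graph V E \<longleftrightarrow>
     (\<forall>u\<in>V. \<forall>v\<in>V. \<exists>p. is_walk V E p \<and> hd p = u \<and> last p = v)"

definition has_cycle :: "'v set \<Rightarrow> 'v set set \<Rightarrow> bool" where
  "has_cycle V E \<longleftrightarrow>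
     (\<exists>p. is_walk V E p \<and> distinct p \<and> length p \<ge> 3 \<and> {last p, hd p} \<in> E)"

definition is_tree :: "'v set \<Rightarrow> 'v set set \<Rightarrow> bool" where
  "is_tree V E \<longleftrightarrow> finite V \<and> V \<noteq> {} \<and> simple_graph V E \<and>
     connected_graph V E \<and> \<not> has_cycle V E"

definition degree :: "'v set set \<Rightarrow> 'v \<Rightarrow> nat" where
  "degree E v = card {e\<in>E. v \<in> e}"

definition is_cutpoint :: "'v set \<Rightarrow> 'v set set \<Rightarrow> 'v \<Rightarrow> bool" where
  "is_cutpoint V E v \<longleftrightarrow> v \<in> V \<and>
     \<not> connected_graph (V - {v}) {e\<in>E. v \<notin> e}"

definition is_chordless_path :: "'v set \<Rightarrow> 'v set set \<Rightarrow> bool" where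
  "is_chordless_path V E \<longleftrightarrow>
     (\<exists>p. distinct p \<and> set p = V \<and> E = {{p ! i, p ! Suc i} | i. Suc i < length p})"

definition is_caterpillar :: "'v set \<Rightarrow> 'v set set \<Rightarrow> bool" where
  "is_caterpillar V E \<longleftrightarrow> is_tree V E \<and>
     (let V' = {v\<in>V. degree E v \<noteq> 1} in is_chordless_path V' {e\<in>E. e \<subseteq> V'})"

section \<open>Polynomial ring k[x_i : i \<in> X] inside the type of finitely supported polynomials\<close>

type_synonym ('x, 'k) mpoly = "('x \<Rightarrow>\<^sub>0 nat) \<Rightarrow>\<^sub>0 'k"

definition poly_ring :: "'x set \<Rightarrow> ('x, 'k::comm_ring_1) mpoly set" where
  "poly_ring X = {p. \<forall>m\<in>Poly_Mapping.keys p. Poly_Mapping.keys m \<subseteq> X}"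

definition pvar :: "'x \<Rightarrow> ('x, 'k::comm_ring_1) mpoly" where
  "pvar x = Poly_Mapping.single (Poly_Mapping.single x 1) 1"

definition ideal_in :: "'a::comm_ring_1 set \<Rightarrow> 'a set \<Rightarrow> bool" where
  "ideal_in S I \<longleftrightarrow> I \<subseteq> S \<and> 0 \<in> I \<and> (\<forall>a\<in>I. \<forall>b\<in>I. a + b \<in> I) \<and>
     (\<forall>r\<in>S. \<forall>a\<in>I. r * a \<in> I)"

definition gen_ideal :: "'a::comm_ring_1 set \<Rightarrow> 'a set \<Rightarrow> 'a set" where
  "gen_ideal S G = \<Inter>{I. ideal_in S I \<and> G \<subseteq> I}"

definition prime_ideal_in :: "'a::comm_ring_1 set \<Rightarrow> 'a set \<Rightarrow> bool" where
  "prime_ideal_in S P \<longleftrightarrow> ideal_in S P \<and> P \<noteq> S \<and>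
     (\<forall>a\<in>S. \<forall>b\<in>S. a * b \<in> P \<longrightarrow> a \<in> P \<or> b \<in> P)"

(* Krull dimension of S/I: supremum of lengths n of strict chains P_0 \<subset> ... \<subset> P_n
   of prime ideals of S/I, i.e. of prime ideals of S containing I *)
definition krull_dim_quot :: "'a::comm_ring_1 set \<Rightarrow> 'a set \<Rightarrow> enat" where
  "krull_dim_quot S I = Sup (enat ` {n. \<exists>P :: nat \<Rightarrow> 'a set.
       (\<forall>i\<le>n. prime_ideal_in S (P i) \<and> I \<subseteq> P i) \<and> (\<forall>i<n. P i \<subset> P (Suc i))})"

definition line_graph_edge_ideal :: "'v set set \<Rightarrow> ('v set, 'k::comm_ring_1) mpoly set" where
  "line_graph_edge_ideal E = gen_ideal (poly_ring E)
     {pvar f * pvar g | f g. f \<in> E \<and> g \<in> E \<and> f \<noteq> g \<and> f \<inter> g \<noteq> {}}"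

end

theory Submission
  imports Defs "HOL-Library.FuncSet"
begin


lemma pr_iff: "p \<in> poly_ring X \<longleftrightarrow> (\<forall>m\<in>Poly_Mapping.keys p. Poly_Mapping.keys m \<subseteq> X)"
  by (simp add: poly_ring_def)

lemma keys_add_nat: "Poly_Mapping.keys ((m::'x \<Rightarrow>\<^sub>0 nat) + n) = Poly_Mapping.keys m \<union> Poly_Mapping.keys n"
  by (auto simp: in_keys_iff lookup_add)

lemma pr_0: "0 \<in> poly_ring X" by (simp add: pr_iff)
lemma pr_1: "1 \<in> poly_ring X" by (simp add: pr_iff)
lemma pr_single: "Poly_Mapping.keys m \<subseteq> X \<Longrightarrow> Poly_Mapping.single m c \<in> poly_ring X"
  by (simp add: pr_iff)
lemma pr_const: "Poly_Mapping.single 0 c \<in> poly_ring X"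
  by (simp add: pr_iff)
lemma pr_add: "p \<in> poly_ring X \<Longrightarrow> q \<in> poly_ring X \<Longrightarrow> p + q \<in> poly_ring X"
  unfolding pr_iff using keys_add[of p q] by blast
lemma pr_uminus: "p \<in> poly_ring X \<Longrightarrow> - p \<in> poly_ring X"
  unfolding pr_iff by (simp add: in_keys_iff)
lemma pr_diff: "p \<in> poly_ring X \<Longrightarrow> q \<in> poly_ring X \<Longrightarrow> p - q \<in> poly_ring X"
  unfolding diff_conv_add_uminus by (intro pr_add pr_uminus)
lemma pr_mult: "p \<in> poly_ring X \<Longrightarrow> q \<in> poly_ring X \<Longrightarrow> p * q \<in> poly_ring X"
  unfolding pr_iff
proof (intro impI ballI)
  fix m assume p: "\<forall>m\<in>Poly_Mapping.keys p. Poly_Mapping.keys m \<subseteq> X"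
    and q: "\<forall>m\<in>Poly_Mapping.keys q. Poly_Mapping.keys m \<subseteq> X"
    and m: "m \<in> Poly_Mapping.keys (p * q)"
  then obtain u v where "m = u + v" "u \<in> Poly_Mapping.keys p" "v \<in> Poly_Mapping.keys q"
    using keys_mult[of p q] by blast
  then show "Poly_Mapping.keys m \<subseteq> X" using p q by (simp add: keys_add_nat)
qed
lemma pr_sum: "(\<And>i. i \<in> A \<Longrightarrow> f i \<in> poly_ring X) \<Longrightarrow> sum f A \<in> poly_ring X"
  by (induct A rule: infinite_finite_induct) (auto intro: pr_0 pr_add)
lemma pr_pvar: "x \<in> X \<Longrightarrow> pvar x \<in> poly_ring X"
  unfolding pvar_def by (rule pr_single) simp

lemma ideal_mult: "ideal_in S I \<Longrightarrow> r \<in> S \<Longrightarrow> a \<in> I \<Longrightarrow> r * a \<in> I"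
  by (simp add: ideal_in_def)
lemma ideal_sub: "ideal_in S I \<Longrightarrow> a \<in> I \<Longrightarrow> a \<in> S"
  by (auto simp: ideal_in_def)
lemma ideal_add: "ideal_in S I \<Longrightarrow> a \<in> I \<Longrightarrow> b \<in> I \<Longrightarrow> a + b \<in> I"
  by (simp add: ideal_in_def)
lemma ideal_0: "ideal_in S I \<Longrightarrow> 0 \<in> I"
  by (simp add: ideal_in_def)
lemma ideal_sum: "ideal_in S I \<Longrightarrow> (\<And>i. i \<in> A \<Longrightarrow> f i \<in> I) \<Longrightarrow> sum f A \<in> I"
  by (induct A rule: infinite_finite_induct) (auto intro: ideal_0 ideal_add)

lemma ideal_diff:
  assumes "ideal_in (poly_ring X) I" "a \<in> I" "b \<in> I"
  shows "a - b \<in> (I :: ('x,'k::comm_ring_1) mpoly set)"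
proof -
  have "(-1) * b \<in> I" by (rule ideal_mult[OF assms(1) _ assms(3)]) (rule pr_uminus[OF pr_1])
  then have "a + (-1) * b \<in> I" by (rule ideal_add[OF assms(1,2)])
  then show ?thesis by simp
qed

definition restr :: "('x,'k::comm_ring_1) mpoly \<Rightarrow> ('x \<Rightarrow>\<^sub>0 nat) set \<Rightarrow> ('x,'k) mpoly" where
  "restr p Z = (\<Sum>m\<in>Poly_Mapping.keys p \<inter> Z. Poly_Mapping.single m (Poly_Mapping.lookup p m))"

lemma lookup_sum_single:
  assumes "finite K"
  shows "Poly_Mapping.lookup (\<Sum>m\<in>K. Poly_Mapping.single m (g m)) n = (if n \<in> K then g n else 0)"
  using assms by (simp add: lookup_sum lookup_single when_def)

lemma lookup_restr: "Poly_Mapping.lookup (restr p Z) n = (if n \<in> Z then Poly_Mapping.lookup p n else 0)"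
  unfolding restr_def by (subst lookup_sum_single) (auto simp: in_keys_iff)

lemma restr_split: "p = restr p Z + restr p (- Z)"
  by (rule poly_mapping_eqI) (simp add: lookup_add lookup_restr)

lemma keys_restr: "Poly_Mapping.keys (restr p Z) = Poly_Mapping.keys p \<inter> Z"
  by (auto simp: in_keys_iff lookup_restr split: if_splits)

lemma pr_restr: "p \<in> poly_ring X \<Longrightarrow> restr p Z \<in> poly_ring X"
  by (auto simp: pr_iff keys_restr)

lemma nzd:
  fixes a b :: "('x,'k::field) mpoly"
  assumes X: "finite X" and ab: "a \<in> poly_ring X" "b \<in> poly_ring X" and nz: "a \<noteq> 0" "b \<noteq> 0"
  shows "a * b \<noteq> 0"
proof -
  obtain es where es: "distinct es" "set es = X" using finite_distinct_list X by blast
  define w :: "('x \<Rightarrow>\<^sub>0 nat) \<Rightarrow> (nat \<Rightarrow>\<^sub>0 nat)" where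
    "w m = (\<Sum>i<length es. Poly_Mapping.single i (Poly_Mapping.lookup m (es!i)))" for m
  have w_add: "w (m + n) = w m + w n" for m n
    by (simp add: w_def lookup_add single_add sum.distrib)
  have lw: "Poly_Mapping.lookup (w m) i = (if i < length es then Poly_Mapping.lookup m (es!i) else 0)" for m i
    by (simp add: w_def lookup_sum lookup_single when_def)
  have w_inj: "m = n" if "Poly_Mapping.keys m \<subseteq> X" "Poly_Mapping.keys n \<subseteq> X" "w m = w n" for m n
  proof (rule poly_mapping_eqI)
    fix x
    show "Poly_Mapping.lookup m x = Poly_Mapping.lookup n x"
    proof (cases "x \<in> X")
      case True
      then obtain i where "i < length es" "es!i = x" using es by (auto simp: in_set_conv_nth)
      then show ?thesis using lw[of m i] lw[of n i] that(3) by metis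
    next
      case False
      then show ?thesis using that by (metis in_keys_iff subsetD)
    qed
  qed
  have fa: "finite (w ` Poly_Mapping.keys a)" "w ` Poly_Mapping.keys a \<noteq> {}" using nz by auto
  have fb: "finite (w ` Poly_Mapping.keys b)" "w ` Poly_Mapping.keys b \<noteq> {}" using nz by auto
  obtain a0 where a0: "a0 \<in> Poly_Mapping.keys a" "w a0 = Max (w ` Poly_Mapping.keys a)"
    using Max_in[OF fa] by auto
  obtain b0 where b0: "b0 \<in> Poly_Mapping.keys b" "w b0 = Max (w ` Poly_Mapping.keys b)"
    using Max_in[OF fb] by auto
  have la: "w l \<le> w a0" if "l \<in> Poly_Mapping.keys a" for l using a0 fa that by simp
  have lb: "w q \<le> w b0" if "q \<in> Poly_Mapping.keys b" for q using b0 fb that by simp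
  define k where "k = a0 + b0"
  have key: "l = a0" if l: "l \<in> Poly_Mapping.keys a" and q: "q \<in> Poly_Mapping.keys b" and kk: "k = l + q" for l q
  proof -
    have "w k = w l + w q" by (simp add: kk w_add)
    moreover have "w k = w a0 + w b0" by (simp add: k_def w_add)
    ultimately have wk: "w l + w q = w a0 + w b0" by simp
    have "w l = w a0"
    proof (rule ccontr)
      assume "w l \<noteq> w a0"
      then have "w l < w a0" using la[OF l] by simp
      then have "w l + w q < w a0 + w b0" using lb[OF q] by (rule add_less_le_mono)
      then show False using wk by simp
    qed
    then show ?thesis using w_inj ab l a0(1) unfolding pr_iff by blast
  qed
  have pt: "Poly_Mapping.lookup a l * (\<Sum>q. Poly_Mapping.lookup b q when k = l + q)
      = (if l = a0 then Poly_Mapping.lookup a a0 * Poly_Mapping.lookup b b0 else 0)" for l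
  proof (cases "l = a0")
    case True
    have eq: "(\<lambda>q. Poly_Mapping.lookup b q when k = l + q) = (\<lambda>q. if q = b0 then Poly_Mapping.lookup b q else 0)"
      using True by (auto simp: k_def when_def fun_eq_iff)
    have "(\<Sum>q. Poly_Mapping.lookup b q when k = l + q) = Poly_Mapping.lookup b b0"
      unfolding eq by simp
    then show ?thesis using True by simp
  next
    case False
    show ?thesis
    proof (cases "l \<in> Poly_Mapping.keys a")
      case True
      have eq: "(\<lambda>q. Poly_Mapping.lookup b q when k = l + q) = (\<lambda>q. 0)"
        using key[OF True] False by (auto simp: when_def fun_eq_iff in_keys_iff)
      have "(\<Sum>q. Poly_Mapping.lookup b q when k = l + q) = 0"
        unfolding eq by simp
      then show ?thesis using False by simp
    next
      case F2: False
      then show ?thesis using False by (simp add: in_keys_iff)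
    qed
  qed
  have "Poly_Mapping.lookup (a * b) k = Poly_Mapping.lookup a a0 * Poly_Mapping.lookup b b0"
    unfolding lookup_mult pt by simp
  moreover have "Poly_Mapping.lookup a a0 * Poly_Mapping.lookup b b0 \<noteq> 0"
    using a0 b0 by (simp add: in_keys_iff)
  ultimately have nz: "Poly_Mapping.lookup (a * b) k \<noteq> 0" by simp
  show ?thesis
  proof
    assume "a * b = 0"
    then show False using nz by simp
  qed
qed

definition VI :: "'x set \<Rightarrow> 'x set \<Rightarrow> ('x,'k::comm_ring_1) mpoly set" where
  "VI X A = {p \<in> poly_ring X. \<forall>m\<in>Poly_Mapping.keys p. Poly_Mapping.keys m \<inter> A \<noteq> {}}"

lemma VI_ideal: "ideal_in (poly_ring X) (VI X A :: ('x,'k::comm_ring_1) mpoly set)"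
  unfolding ideal_in_def
proof (intro conjI ballI)
  show "VI X A \<subseteq> poly_ring X" by (auto simp: VI_def)
  show "0 \<in> VI X A" by (simp add: VI_def pr_0)
  fix a b :: "('x,'k) mpoly" assume "a \<in> VI X A" "b \<in> VI X A"
  then show "a + b \<in> VI X A" unfolding VI_def using pr_add keys_add[of a b] by blast
next
  fix r a :: "('x,'k) mpoly" assume r: "r \<in> poly_ring X" and a: "a \<in> VI X A"
  show "r * a \<in> VI X A"
    unfolding VI_def
  proof (intro CollectI conjI ballI)
    show "r * a \<in> poly_ring X" using r a pr_mult by (auto simp: VI_def)
    fix m assume "m \<in> Poly_Mapping.keys (r * a)"
    then obtain u v where "m = u + v" "v \<in> Poly_Mapping.keys a" using keys_mult by blast
    then show "Poly_Mapping.keys m \<inter> A \<noteq> {}" using a by (auto simp: VI_def keys_add_nat)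
  qed
qed

lemma VI_prime:
  assumes X: "finite X"
  shows "prime_ideal_in (poly_ring X) (VI X A :: ('x,'k::field) mpoly set)"
  unfolding prime_ideal_in_def
proof (intro conjI ballI impI)
  show "ideal_in (poly_ring X) (VI X A :: ('x,'k) mpoly set)" by (rule VI_ideal)
  have "(1::('x,'k) mpoly) \<notin> VI X A" by (simp add: VI_def)
  then show "VI X A \<noteq> (poly_ring X :: ('x,'k) mpoly set)" using pr_1 by blast
next
  fix a b :: "('x,'k) mpoly"
  assume a: "a \<in> poly_ring X" and b: "b \<in> poly_ring X" and ab: "a * b \<in> VI X A"
  let ?Z = "{m. Poly_Mapping.keys m \<inter> A = {}}"
  show "a \<in> VI X A \<or> b \<in> VI X A"
  proof (rule ccontr)
    assume "\<not> (a \<in> VI X A \<or> b \<in> VI X A)"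
    then have na: "a \<notin> VI X A" and nb: "b \<notin> VI X A" by auto
    define ra where "ra = restr a ?Z"
    define ra' where "ra' = restr a (- ?Z)"
    define rb where "rb = restr b ?Z"
    define rb' where "rb' = restr b (- ?Z)"
    have ra_ne: "ra \<noteq> 0"
    proof
      assume "ra = 0"
      then have "Poly_Mapping.keys a \<inter> ?Z = {}" using keys_restr[of a ?Z] ra_def by simp
      then show False using na a by (auto simp: VI_def)
    qed
    have rb_ne: "rb \<noteq> 0"
    proof
      assume "rb = 0"
      then have "Poly_Mapping.keys b \<inter> ?Z = {}" using keys_restr[of b ?Z] rb_def by simp
      then show False using nb b by (auto simp: VI_def)
    qed
    have ra'_in: "ra' \<in> VI X A" using pr_restr[OF a] unfolding ra'_def VI_def by (auto simp: keys_restr)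
    have rb'_in: "rb' \<in> VI X A" using pr_restr[OF b] unfolding rb'_def VI_def by (auto simp: keys_restr)
    have raS: "ra \<in> poly_ring X" "rb \<in> poly_ring X" using pr_restr a b ra_def rb_def by auto
    have ea: "a = ra + ra'" unfolding ra_def ra'_def by (rule restr_split)
    have eb: "b = rb + rb'" unfolding rb_def rb'_def by (rule restr_split)
    have "a * b = (ra + ra') * (rb + rb')"
      by (simp only: ea[symmetric] eb[symmetric])
    also have "\<dots> = ra * rb + (ra * rb' + (rb + rb') * ra')" by (simp add: algebra_simps)
    finally have dec: "a * b = ra * rb + (ra * rb' + b * ra')"
      by (simp only: eb[symmetric])
    have "ra * rb' \<in> VI X A" by (rule ideal_mult[OF VI_ideal raS(1) rb'_in])
    moreover have "b * ra' \<in> VI X A" by (rule ideal_mult[OF VI_ideal b ra'_in])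
    ultimately have "ra * rb' + b * ra' \<in> VI X A" by (rule ideal_add[OF VI_ideal])
    then have "a * b - (ra * rb' + b * ra') \<in> VI X A"
      using ideal_diff[OF VI_ideal ab] by blast
    then have inVI: "ra * rb \<in> VI X A" using dec by simp
    have "Poly_Mapping.keys (ra * rb) \<subseteq> ?Z"
    proof
      fix m assume "m \<in> Poly_Mapping.keys (ra * rb)"
      then obtain u v where "m = u + v" "u \<in> Poly_Mapping.keys ra" "v \<in> Poly_Mapping.keys rb"
        using keys_mult by blast
      then show "m \<in> ?Z" unfolding ra_def rb_def keys_restr by (auto simp: keys_add_nat)
    qed
    then have "Poly_Mapping.keys (ra * rb) = {}" using inVI unfolding VI_def by blast
    then have "ra * rb = 0" by simp
    then show False using nzd[OF X raS ra_ne rb_ne] by simp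
  qed
qed



definition cmul :: "'k::field \<Rightarrow> ('x,'k) mpoly \<Rightarrow> ('x,'k) mpoly" where
  "cmul c p = Poly_Mapping.single 0 c * p"

interpretation pv: vector_space "cmul :: 'k::field \<Rightarrow> ('x,'k) mpoly \<Rightarrow> ('x,'k) mpoly"
proof
  fix a b :: 'k and x y :: "('x,'k) mpoly"
  show "cmul a (x + y) = cmul a x + cmul a y" by (simp add: cmul_def distrib_left)
  show "cmul (a + b) x = cmul a x + cmul b x" by (simp add: cmul_def single_add distrib_right)
  show "cmul a (cmul b x) = cmul (a * b) x" by (simp add: cmul_def mult_single mult.assoc[symmetric])
  show "cmul 1 x = x" by (simp add: cmul_def)
qed

lemma cmul_0[simp]: "cmul 0 p = 0" by (simp add: cmul_def)
lemma cmul_1[simp]: "cmul 1 p = p" by (simp add: cmul_def)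

lemma pr_cmul: "p \<in> poly_ring X \<Longrightarrow> cmul c p \<in> poly_ring X"
  unfolding cmul_def by (intro pr_mult pr_const)

lemma ideal_cmul: "ideal_in (poly_ring X) I \<Longrightarrow> p \<in> I \<Longrightarrow> cmul c p \<in> I"
  unfolding cmul_def by (intro ideal_mult[of "poly_ring X"] pr_const)

definition lowdeg :: "'x set \<Rightarrow> nat \<Rightarrow> ('x,'k::comm_ring_1) mpoly set" where
  "lowdeg X N = {p \<in> poly_ring X. \<forall>m\<in>Poly_Mapping.keys p. \<forall>x. Poly_Mapping.lookup m x \<le> N}"

definition indep_mod :: "('x,'k::field) mpoly set \<Rightarrow> (nat \<Rightarrow> ('x,'k) mpoly) \<Rightarrow> nat \<Rightarrow> bool" where
  "indep_mod P b n \<longleftrightarrow> (\<forall>c. (\<Sum>i<n. cmul (c i) (b i)) \<in> P \<longrightarrow> (\<forall>i<n. c i = 0))"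

definition ind :: "'x set \<Rightarrow> ('x,'k::field) mpoly set \<Rightarrow> nat \<Rightarrow> nat \<Rightarrow> bool" where
  "ind X P N n \<longleftrightarrow> (\<exists>b. (\<forall>i<n. b i \<in> lowdeg X N) \<and> indep_mod P b n)"

lemma lowdeg_mono: "p \<in> lowdeg X N \<Longrightarrow> N \<le> N' \<Longrightarrow> p \<in> lowdeg X N'"
  unfolding lowdeg_def by (auto intro: order_trans)

lemma lowdeg_mult:
  assumes "p \<in> lowdeg X N1" "q \<in> lowdeg X N2"
  shows "p * q \<in> lowdeg X (N1 + N2)"
  unfolding lowdeg_def
proof (intro CollectI conjI ballI allI)
  show "p * q \<in> poly_ring X" using assms by (intro pr_mult) (auto simp: lowdeg_def)
  fix m x assume "m \<in> Poly_Mapping.keys (p * q)"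
  then obtain u v where "m = u + v" "u \<in> Poly_Mapping.keys p" "v \<in> Poly_Mapping.keys q"
    using keys_mult[of p q] by blast
  then show "Poly_Mapping.lookup m x \<le> N1 + N2" using assms
    by (simp add: lookup_add lowdeg_def add_mono)
qed

lemma ind_mono: "ind X P N n \<Longrightarrow> N \<le> N' \<Longrightarrow> ind X P N' n"
  unfolding ind_def using lowdeg_mono by blast

lemma ind_zero: "ind X P N 0"
  unfolding ind_def indep_mod_def by simp

lemma ideal_unit:
  fixes Q :: "('x,'k::field) mpoly set"
  assumes Q: "ideal_in (poly_ring X) Q" and c: "c \<noteq> 0" and in_Q: "Poly_Mapping.single 0 c \<in> Q"
  shows "Q = poly_ring X"
proof -
  have "cmul (inverse c) (Poly_Mapping.single 0 c) \<in> Q" by (rule ideal_cmul[OF Q in_Q])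
  then have one: "1 \<in> Q" using c by (simp add: cmul_def mult_single)
  show ?thesis
  proof
    show "Q \<subseteq> poly_ring X" using Q by (auto simp: ideal_in_def)
    show "poly_ring X \<subseteq> Q"
    proof
      fix r :: "('x,'k) mpoly" assume "r \<in> poly_ring X"
      then have "r * 1 \<in> Q" by (rule ideal_mult[OF Q _ one])
      then show "r \<in> Q" by simp
    qed
  qed
qed

lemma ind_one:
  fixes Q :: "('x,'k::field) mpoly set"
  assumes "prime_ideal_in (poly_ring X) Q"
  shows "ind X Q N 1"
  unfolding ind_def
proof (intro exI conjI)
  show "\<forall>i<1. (\<lambda>_. 1) i \<in> (lowdeg X N :: ('x,'k) mpoly set)" by (simp add: lowdeg_def pr_1)
  show "indep_mod Q (\<lambda>_. 1) 1"
    unfolding indep_mod_def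
  proof (intro allI impI)
    fix c :: "nat \<Rightarrow> 'k" and i assume h: "(\<Sum>i<1. cmul (c i) 1) \<in> Q" and i: "i < (1::nat)"
    then have "Poly_Mapping.single 0 (c 0) \<in> Q" by (simp add: cmul_def)
    then have "c 0 = 0" using ideal_unit[of X Q "c 0"] assms by (auto simp: prime_ideal_in_def)
    then show "c i = 0" using i by simp
  qed
qed

lemma sum_lessThan_add: fixes m n :: nat shows "(\<Sum>i<m+n. f i) = (\<Sum>i<m. f i) + (\<Sum>j<n. f (m + j))"
  by (induct n) (simp_all add: add.assoc)

lemma ind_add:
  fixes P Q :: "('x,'k::field) mpoly set"
  assumes P: "prime_ideal_in (poly_ring X) P" and Q: "ideal_in (poly_ring X) Q" and PQ: "P \<subseteq> Q"
    and fQ: "f \<in> Q" and fP: "f \<notin> P" and fdeg: "f \<in> lowdeg X e"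
    and i1: "ind X P N1 m1" and i2: "ind X Q N2 m2" and N: "N1 + e \<le> N" "N2 \<le> N"
  shows "ind X P N (m1 + m2)"
proof -
  obtain b1 where b1: "\<forall>i<m1. b1 i \<in> lowdeg X N1" "indep_mod P b1 m1" using i1 by (auto simp: ind_def)
  obtain b2 where b2: "\<forall>i<m2. b2 i \<in> lowdeg X N2" "indep_mod Q b2 m2" using i2 by (auto simp: ind_def)
  define bb where "bb i = (if i < m1 then f * b1 i else b2 (i - m1))" for i
  have PI: "ideal_in (poly_ring X) P" using P by (simp add: prime_ideal_in_def)
  have fS: "f \<in> poly_ring X" using fdeg by (simp add: lowdeg_def)
  have "bb i \<in> lowdeg X N" if "i < m1 + m2" for i
  proof (cases "i < m1")
    case True
    have "f * b1 i \<in> lowdeg X (e + N1)" using lowdeg_mult fdeg b1(1) True by blast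
    then show ?thesis using True N by (auto simp: bb_def intro: lowdeg_mono)
  next
    case False
    then have "i - m1 < m2" using that by simp
    then show ?thesis using False N b2(1) by (auto simp: bb_def intro: lowdeg_mono)
  qed
  moreover have "indep_mod P bb (m1 + m2)"
    unfolding indep_mod_def
  proof (intro allI impI)
    fix c :: "nat \<Rightarrow> 'k" and i
    assume h: "(\<Sum>i<m1 + m2. cmul (c i) (bb i)) \<in> P" and i: "i < m1 + m2"
    define Y where "Y = (\<Sum>i<m1. cmul (c i) (b1 i))"
    define Z where "Z = (\<Sum>j<m2. cmul (c (m1 + j)) (b2 j))"
    have "(\<Sum>i<m1 + m2. cmul (c i) (bb i)) = (\<Sum>i<m1. cmul (c i) (f * b1 i)) + Z"
      unfolding sum_lessThan_add Z_def by (simp add: bb_def)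
    also have "(\<Sum>i<m1. cmul (c i) (f * b1 i)) = f * Y"
      unfolding Y_def cmul_def by (simp add: sum_distrib_left mult.left_commute)
    finally have sumeq: "(\<Sum>i<m1 + m2. cmul (c i) (bb i)) = f * Y + Z" .
    have YS: "Y \<in> poly_ring X" unfolding Y_def
      using b1(1) by (intro pr_sum pr_cmul) (auto simp: lowdeg_def)
    have fYQ: "f * Y \<in> Q" using ideal_mult[OF Q YS fQ] by (simp add: mult.commute)
    have "f * Y + Z \<in> Q" using h sumeq PQ by auto
    then have "f * Y + Z - f * Y \<in> Q" by (rule ideal_diff[OF Q _ fYQ])
    then have "Z \<in> Q" by simp
    moreover from b2(2) have "(\<Sum>i<m2. cmul ((\<lambda>j. c (m1 + j)) i) (b2 i)) \<in> Q \<longrightarrow> (\<forall>i<m2. (\<lambda>j. c (m1 + j)) i = 0)"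
      unfolding indep_mod_def by (rule spec)
    ultimately have c2: "\<forall>j<m2. c (m1 + j) = 0" unfolding Z_def by simp
    then have "Z = 0" unfolding Z_def by simp
    then have "f * Y \<in> P" using h sumeq by simp
    then have "Y \<in> P" using P fS YS fP unfolding prime_ideal_in_def by blast
    then have c1: "\<forall>i<m1. c i = 0" using b1(2) unfolding indep_mod_def Y_def by blast
    show "c i = 0"
    proof (cases "i < m1")
      case True then show ?thesis using c1 by simp
    next
      case False
      then have "i - m1 < m2" using i by simp
      then have "c (m1 + (i - m1)) = 0" using c2 by blast
      then show ?thesis using False by simp
    qed
  qed
  ultimately show ?thesis unfolding ind_def by blast
qed



lemma mon_in_ideal:
  fixes P :: "('x,'k::comm_ring_1) mpoly set"
  assumes PI: "ideal_in (poly_ring X) P" and m: "Poly_Mapping.keys m \<subseteq> X"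
    and x: "x \<in> Poly_Mapping.keys m" and px: "pvar x \<in> P"
  shows "Poly_Mapping.single m c \<in> P"
proof -
  define m' where "m' = m - Poly_Mapping.single x (1::nat)"
  have lx: "Poly_Mapping.lookup m x \<ge> 1" using x by (simp add: in_keys_iff)
  have mm: "m = m' + Poly_Mapping.single x 1"
  proof (rule poly_mapping_eqI)
    fix y show "Poly_Mapping.lookup m y = Poly_Mapping.lookup (m' + Poly_Mapping.single x 1) y"
      using lx by (cases "y = x") (simp_all add: m'_def lookup_add lookup_minus lookup_single)
  qed
  have "Poly_Mapping.keys m' \<subseteq> Poly_Mapping.keys m"
    by (auto simp: m'_def in_keys_iff lookup_minus lookup_single when_def split: if_splits)
  then have m'S: "Poly_Mapping.single m' c \<in> poly_ring X" using m by (intro pr_single) auto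
  have "Poly_Mapping.single m' c * pvar x \<in> P" by (rule ideal_mult[OF PI m'S px])
  moreover have "Poly_Mapping.single m' c * pvar x = Poly_Mapping.single m c"
    unfolding pvar_def mult_single mm[symmetric] by simp
  ultimately show ?thesis by simp
qed

lemma card_mons:
  assumes F: "finite F"
  shows "finite {m :: 'x \<Rightarrow>\<^sub>0 nat. Poly_Mapping.keys m \<subseteq> F \<and> (\<forall>x. Poly_Mapping.lookup m x \<le> N)}"
    and "card {m :: 'x \<Rightarrow>\<^sub>0 nat. Poly_Mapping.keys m \<subseteq> F \<and> (\<forall>x. Poly_Mapping.lookup m x \<le> N)} \<le> (N+1) ^ card F"
proof -
  let ?M = "{m :: 'x \<Rightarrow>\<^sub>0 nat. Poly_Mapping.keys m \<subseteq> F \<and> (\<forall>x. Poly_Mapping.lookup m x \<le> N)}"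
  let ?g = "\<lambda>m. restrict (Poly_Mapping.lookup m) F"
  let ?B = "PiE F (\<lambda>_. {..N})"
  have inj: "inj_on ?g ?M"
  proof (rule inj_onI)
    fix m m' assume m: "m \<in> ?M" and m': "m' \<in> ?M" and eq: "?g m = ?g m'"
    show "m = m'"
    proof (rule poly_mapping_eqI)
      fix x show "Poly_Mapping.lookup m x = Poly_Mapping.lookup m' x"
      proof (cases "x \<in> F")
        case True then show ?thesis using fun_cong[OF eq, of x] by simp
      next
        case False
        then have "x \<notin> Poly_Mapping.keys m" "x \<notin> Poly_Mapping.keys m'" using m m' by auto
        then show ?thesis by (simp add: in_keys_iff)
      qed
    qed
  qed
  have sub: "?g ` ?M \<subseteq> ?B" by (auto simp: PiE_def Pi_def)
  have fB: "finite ?B" using F by (simp add: finite_PiE)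
  show "finite ?M" by (rule inj_on_finite[OF inj sub fB])
  have "card ?M \<le> card ?B" by (rule card_inj_on_le[OF inj sub fB])
  also have "card ?B = (N+1) ^ card F" using F by (simp add: card_PiE)
  finally show "card ?M \<le> (N+1) ^ card F" .
qed

lemma ind_bound:
  fixes P :: "('x,'k::field) mpoly set"
  assumes X: "finite X" and F: "F \<subseteq> X" and PI: "ideal_in (poly_ring X) P"
    and vars: "\<forall>x\<in>X - F. pvar x \<in> P" and i: "ind X P N n"
  shows "n \<le> (N+1) ^ card F"
proof -
  obtain b where bl: "\<forall>i<n. b i \<in> lowdeg X N" and bi: "indep_mod P b n"
    using i by (auto simp: ind_def)
  define Z where "Z = {m :: 'x \<Rightarrow>\<^sub>0 nat. Poly_Mapping.keys m \<subseteq> F}"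
  define M where "M = {m :: 'x \<Rightarrow>\<^sub>0 nat. Poly_Mapping.keys m \<subseteq> F \<and> (\<forall>x. Poly_Mapping.lookup m x \<le> N)}"
  define T where "T = (\<lambda>m. Poly_Mapping.single m (1::'k)) ` M"
  define r where "r i = restr (b i) Z" for i
  have fF: "finite F" using X F finite_subset by blast
  have fM: "finite M" and cM: "card M \<le> (N+1) ^ card F" unfolding M_def using card_mons[OF fF] by auto
  have fT: "finite T" unfolding T_def using fM by simp
  have cT: "card T \<le> card M" unfolding T_def using fM by (rule card_image_le)
  have bS: "b i \<in> poly_ring X" if "i < n" for i using bl that by (simp add: lowdeg_def)
  have diffP: "b i - r i \<in> P" if "i < n" for i
  proof -
    have "b i - r i = restr (b i) (- Z)"
      by (rule poly_mapping_eqI) (simp add: r_def lookup_minus lookup_restr)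
    also have "\<dots> \<in> P"
      unfolding restr_def
    proof (rule ideal_sum[OF PI])
      fix m assume m: "m \<in> Poly_Mapping.keys (b i) \<inter> - Z"
      then have mX: "Poly_Mapping.keys m \<subseteq> X" using bS[OF that] by (auto simp: pr_iff)
      from m obtain x where x: "x \<in> Poly_Mapping.keys m" "x \<notin> F" by (auto simp: Z_def)
      then have "pvar x \<in> P" using vars mX by auto
      then show "Poly_Mapping.single m (Poly_Mapping.lookup (b i) m) \<in> P"
        using mon_in_ideal[OF PI mX x(1)] by blast
    qed
    finally show ?thesis .
  qed
  have comb: "\<forall>i<n. c i = 0" if h: "(\<Sum>i<n. cmul (c i) (r i)) = 0" for c
  proof -
    have "(\<Sum>i<n. cmul (c i) (b i)) = (\<Sum>i<n. cmul (c i) (b i - r i)) + (\<Sum>i<n. cmul (c i) (r i))"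
      by (simp add: sum.distrib[symmetric] cmul_def algebra_simps)
    also have "\<dots> = (\<Sum>i<n. cmul (c i) (b i - r i))" using h by simp
    also have "\<dots> \<in> P" by (rule ideal_sum[OF PI]) (auto intro: ideal_cmul[OF PI] diffP)
    finally show ?thesis using bi unfolding indep_mod_def by blast
  qed
  have inj: "inj_on r {..<n}"
  proof (rule inj_onI, rule ccontr)
    fix i j assume i: "i \<in> {..<n}" and j: "j \<in> {..<n}" and eq: "r i = r j" and ne: "i \<noteq> j"
    define c :: "nat \<Rightarrow> 'k" where "c k = (if k = i then 1 else if k = j then -1 else 0)" for k
    have ck: "cmul (c k) (r k) = (if k = i then r k else 0) - (if k = j then r k else 0)" for k
      using ne by (simp add: c_def cmul_def single_uminus)
    have "(\<Sum>k<n. cmul (c k) (r k)) = r i - r j"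
      unfolding ck using i j by (simp add: sum_subtractf)
    then have "(\<Sum>k<n. cmul (c k) (r k)) = 0" using eq by simp
    then have "c i = 0" using comb i by blast
    then show False by (simp add: c_def)
  qed
  define A where "A = r ` {..<n}"
  have cA: "card A = n" unfolding A_def using inj by (simp add: card_image)
  have indA: "pv.independent A"
  proof (rule pv.independent_if_scalars_zero)
    show "finite A" unfolding A_def by simp
    fix f :: "('x,'k) mpoly \<Rightarrow> 'k" and x assume h: "(\<Sum>x\<in>A. cmul (f x) x) = 0" and x: "x \<in> A"
    have "(\<Sum>x\<in>A. cmul (f x) x) = (\<Sum>i<n. cmul (f (r i)) (r i))"
      unfolding A_def by (simp add: sum.reindex[OF inj])
    then have "\<forall>i<n. f (r i) = 0" using h comb[of "\<lambda>i. f (r i)"] by simp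
    then show "f x = 0" using x unfolding A_def by auto
  qed
  have spA: "A \<subseteq> pv.span T"
  proof
    fix y assume "y \<in> A"
    then obtain i where i: "i < n" and y: "y = r i" unfolding A_def by auto
    have "r i = (\<Sum>m\<in>Poly_Mapping.keys (b i) \<inter> Z. cmul (Poly_Mapping.lookup (b i) m) (Poly_Mapping.single m 1))"
      unfolding r_def restr_def cmul_def by (simp add: mult_single)
    also have "\<dots> \<in> pv.span T"
    proof (rule pv.span_sum)
      fix m assume m: "m \<in> Poly_Mapping.keys (b i) \<inter> Z"
      then have "m \<in> M" using bl i by (auto simp: M_def Z_def lowdeg_def)
      then have "Poly_Mapping.single m 1 \<in> pv.span T" unfolding T_def by (intro pv.span_base) auto
      then show "cmul (Poly_Mapping.lookup (b i) m) (Poly_Mapping.single m 1) \<in> pv.span T"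
        by (rule pv.span_scale)
    qed
    finally show "y \<in> pv.span T" using y by simp
  qed
  have "card A \<le> card T" using pv.independent_span_bound[OF fT indA spA] by simp
  then show ?thesis using cA cT cM by simp
qed



lemma lowdeg_exists:
  assumes "f \<in> poly_ring X"
  shows "\<exists>e. f \<in> lowdeg X e"
proof -
  define e where "e = (\<Sum>m\<in>Poly_Mapping.keys f. \<Sum>x\<in>Poly_Mapping.keys m. Poly_Mapping.lookup m x)"
  have "Poly_Mapping.lookup m x \<le> e" if m: "m \<in> Poly_Mapping.keys f" for m x
  proof (cases "x \<in> Poly_Mapping.keys m")
    case True
    have "Poly_Mapping.lookup m x \<le> (\<Sum>x\<in>Poly_Mapping.keys m. Poly_Mapping.lookup m x)"
      using True by (intro member_le_sum) auto
    also have "\<dots> \<le> e" unfolding e_def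
      using m by (intro member_le_sum[where f = "\<lambda>m. \<Sum>x\<in>Poly_Mapping.keys m. Poly_Mapping.lookup m x"]) auto
    finally show ?thesis .
  next
    case False then show ?thesis by (simp add: in_keys_iff)
  qed
  then show ?thesis using assms by (auto simp: lowdeg_def)
qed

lemma chain_bound:
  fixes P :: "nat \<Rightarrow> ('x,'k::field) mpoly set"
  assumes X: "finite X" and F: "F \<subseteq> X"
    and primes: "\<forall>i\<le>n. prime_ideal_in (poly_ring X) (P i)"
    and chain: "\<forall>i<n. P i \<subset> P (Suc i)"
    and vars: "\<forall>x\<in>X - F. pvar x \<in> P 0"
  shows "n \<le> card F"
proof -
  have claim: "j \<le> n \<longrightarrow> j \<le> card F \<and> (\<exists>C. \<forall>N m. ind X (P j) N m \<longrightarrow> m \<le> C * (N+1) ^ (card F - j))" for j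
  proof (induct j)
    case 0
    have "ideal_in (poly_ring X) (P 0)" using primes by (simp add: prime_ideal_in_def)
    then have "\<forall>N m. ind X (P 0) N m \<longrightarrow> m \<le> 1 * (N+1) ^ (card F - 0)"
      using ind_bound[OF X F _ vars] by simp
    then show ?case by blast
  next
    case (Suc j)
    show ?case
    proof
      assume sj: "Suc j \<le> n"
      then obtain C where jF: "j \<le> card F" and C: "\<forall>N m. ind X (P j) N m \<longrightarrow> m \<le> C * (N+1) ^ (card F - j)"
        using Suc by auto
      define a where "a = card F - j"
      have Pj: "prime_ideal_in (poly_ring X) (P j)" using primes sj by simp
      have Pj1: "prime_ideal_in (poly_ring X) (P (Suc j))" using primes sj by simp
      have sub: "P j \<subset> P (Suc j)" using chain sj by simp
      then obtain f where fQ: "f \<in> P (Suc j)" and fP: "f \<notin> P j" by blast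
      have QI: "ideal_in (poly_ring X) (P (Suc j))" using Pj1 by (simp add: prime_ideal_in_def)
      have "f \<in> poly_ring X" using fQ QI by (auto simp: ideal_in_def)
      then obtain e where fe: "f \<in> lowdeg X e" using lowdeg_exists by blast
      have grow: "ind X (P j) (N + L * e) (L * m)" if im: "ind X (P (Suc j)) N m" for N m L
      proof (induct L)
        case 0 then show ?case by (simp add: ind_zero)
      next
        case (Suc L)
        have "ind X (P j) (N + Suc L * e) (L * m + m)"
          by (rule ind_add[OF Pj QI _ fQ fP fe Suc im]) (use sub in auto)
        then show ?case by (simp add: add.commute)
      qed
      have bnd: "(N+1) * m \<le> (N+1) * (C * (e+1) ^ a * (N+1) ^ (a - 1)) \<and> 0 < a"
        if im: "ind X (P (Suc j)) N m" for N m
      proof -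
        have "(N+1) * m \<le> C * (N + (N+1) * e + 1) ^ a"
          using C grow[OF im, of "N+1"] unfolding a_def by (simp add: mult.commute)
        also have "N + (N+1) * e + 1 = (N+1) * (e+1)" by (simp add: algebra_simps)
        finally have h: "(N+1) * m \<le> C * ((N+1) * (e+1)) ^ a" .
        have apos: "0 < a"
        proof (rule ccontr)
          assume "\<not> 0 < a"
          then have a0: "a = 0" by simp
          have "ind X (P (Suc j)) C 1" by (rule ind_one[OF Pj1])
          then have "(C+1) * 1 \<le> C * (C + (C+1) * e + 1) ^ a"
            using C grow[of C 1 "C+1"] unfolding a_def by (simp add: mult.commute)
          then show False using a0 by simp
        qed
        have p1: "((N+1) * (e+1)) ^ a = (N+1) ^ a * (e+1) ^ a" by (rule power_mult_distrib)
        have p2: "(N+1) ^ a = (N+1) * (N+1) ^ (a - 1)" using apos by (cases a) simp_all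
        have "C * ((N+1) * (e+1)) ^ a = (N+1) * (C * (e+1) ^ a * (N+1) ^ (a - 1))"
          unfolding p1 p2 by (simp only: mult_ac)
        then show ?thesis using h apos by simp
      qed
      have apos: "0 < a" using bnd[OF ind_one[OF Pj1, of 0]] by simp
      then have "Suc j \<le> card F" unfolding a_def by simp
      moreover have "\<forall>N m. ind X (P (Suc j)) N m \<longrightarrow> m \<le> (C * (e+1) ^ a) * (N+1) ^ (card F - Suc j)"
      proof (intro allI impI)
        fix N m assume "ind X (P (Suc j)) N m"
        then have "(N+1) * m \<le> (N+1) * (C * (e+1) ^ a * (N+1) ^ (a - 1))" using bnd by blast
        then have "m \<le> C * (e+1) ^ a * (N+1) ^ (a - 1)" by (subst (asm) mult_le_cancel1) simp
        moreover have "a - 1 = card F - Suc j" unfolding a_def by simp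
        ultimately show "m \<le> (C * (e+1) ^ a) * (N+1) ^ (card F - Suc j)" by simp
      qed
      ultimately show "Suc j \<le> card F \<and> (\<exists>C. \<forall>N m. ind X (P (Suc j)) N m \<longrightarrow> m \<le> C * (N+1) ^ (card F - Suc j))"
        by blast
    qed
  qed
  then show ?thesis by blast
qed



lemma walk_single: "is_walk V E [x] \<longleftrightarrow> x \<in> V"
  by (simp add: is_walk_def)

lemma walk_cons2: "is_walk V E (x # y # xs) \<longleftrightarrow> x \<in> V \<and> {x, y} \<in> E \<and> is_walk V E (y # xs)"
proof
  assume h: "is_walk V E (x # y # xs)"
  then have e: "\<forall>i. Suc i < length (x # y # xs) \<longrightarrow> {(x # y # xs) ! i, (x # y # xs) ! Suc i} \<in> E"
    and s: "set (x # y # xs) \<subseteq> V" by (simp_all add: is_walk_def)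
  have "{x, y} \<in> E" using e[rule_format, of 0] by simp
  moreover have "\<forall>i. Suc i < length (y # xs) \<longrightarrow> {(y # xs) ! i, (y # xs) ! Suc i} \<in> E"
  proof (intro allI impI)
    fix i assume "Suc i < length (y # xs)"
    then show "{(y # xs) ! i, (y # xs) ! Suc i} \<in> E" using e[rule_format, of "Suc i"] by simp
  qed
  ultimately show "x \<in> V \<and> {x, y} \<in> E \<and> is_walk V E (y # xs)" using s by (simp add: is_walk_def)
next
  assume h: "x \<in> V \<and> {x, y} \<in> E \<and> is_walk V E (y # xs)"
  then have e: "\<forall>i. Suc i < length (y # xs) \<longrightarrow> {(y # xs) ! i, (y # xs) ! Suc i} \<in> E"
    and s: "set (y # xs) \<subseteq> V" by (simp_all add: is_walk_def)
  have "\<forall>i. Suc i < length (x # y # xs) \<longrightarrow> {(x # y # xs) ! i, (x # y # xs) ! Suc i} \<in> E"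
  proof (intro allI impI)
    fix i assume i: "Suc i < length (x # y # xs)"
    show "{(x # y # xs) ! i, (x # y # xs) ! Suc i} \<in> E"
    proof (cases i)
      case 0 then show ?thesis using h by simp
    next
      case (Suc j) then show ?thesis using e[rule_format, of j] i by simp
    qed
  qed
  then show "is_walk V E (x # y # xs)" using h s by (simp add: is_walk_def)
qed

lemma walk_hd: "is_walk V E (y # zs) \<Longrightarrow> y \<in> V"
  by (simp add: is_walk_def)

lemma walk_append: "is_walk V E (xs @ y # zs) \<longleftrightarrow> is_walk V E (xs @ [y]) \<and> is_walk V E (y # zs)"
proof (induct xs)
  case Nil then show ?case by (auto simp: walk_single dest: walk_hd)
next
  case (Cons a xs)
  then show ?case by (cases xs) (auto simp: walk_cons2 walk_single dest: walk_hd)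
qed

lemma walk_mono: "is_walk V' E' p \<Longrightarrow> V' \<subseteq> V \<Longrightarrow> E' \<subseteq> E \<Longrightarrow> is_walk V E p"
  unfolding is_walk_def by blast

lemma walk_distinct:
  "is_walk V E p \<Longrightarrow> \<exists>q. is_walk V E q \<and> distinct q \<and> hd q = hd p \<and> last q = last p \<and> set q \<subseteq> set p"
proof (induct "length p" arbitrary: p rule: less_induct)
  case less
  show ?case
  proof (cases "distinct p")
    case True then show ?thesis using less.prems by blast
  next
    case False
    then obtain ys y zs ws where p: "p = ys @ [y] @ zs @ [y] @ ws" using not_distinct_decomp by blast
    define p' where "p' = ys @ y # ws"
    have w1: "is_walk V E (ys @ [y])" and w2: "is_walk V E (y # zs @ y # ws)"
      using less.prems walk_append[of V E ys y "zs @ y # ws"] p by auto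
    have "is_walk V E (y # ws)"
      using w2 walk_append[of V E "y # zs" y ws] by simp
    then have wp': "is_walk V E p'" unfolding p'_def using w1 walk_append[of V E ys y ws] by simp
    have "length p' < length p" unfolding p p'_def by simp
    then obtain q where q: "is_walk V E q" "distinct q" "hd q = hd p'" "last q = last p'" "set q \<subseteq> set p'"
      using less.hyps wp' by blast
    have "hd p' = hd p" unfolding p p'_def by (cases ys) auto
    moreover have "last p' = last p" unfolding p p'_def by (cases ws) auto
    moreover have "set p' \<subseteq> set p" unfolding p p'_def by auto
    ultimately show ?thesis using q by auto
  qed
qed

lemma simple_edge:
  assumes "simple_graph V E" "e \<in> E" "x \<in> e"
  shows "\<exists>a. e = {x, a} \<and> a \<noteq> x \<and> a \<in> V \<and> x \<in> V"
proof -
  obtain u v where "e = {u, v}" "u \<noteq> v" "u \<in> V" "v \<in> V" using assms by (auto simp: simple_graph_def)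
  then show ?thesis using assms(3) by (metis empty_iff insert_commute insert_iff)
qed

lemma tree_deg2_cut:
  assumes T: "is_tree V E" and e1: "e1 \<in> E" and e2: "e2 \<in> E" and ne: "e1 \<noteq> e2"
    and x1: "x \<in> e1" and x2: "x \<in> e2"
  shows "is_cutpoint V E x"
proof (rule ccontr)
  assume nc: "\<not> is_cutpoint V E x"
  have sg: "simple_graph V E" using T by (simp add: is_tree_def)
  obtain a where a: "e1 = {x, a}" "a \<noteq> x" "a \<in> V" "x \<in> V" using simple_edge[OF sg e1 x1] by blast
  obtain b where b: "e2 = {x, b}" "b \<noteq> x" "b \<in> V" using simple_edge[OF sg e2 x2] by blast
  have ab: "a \<noteq> b" using a b ne by auto
  have conn: "connected_graph (V - {x}) {e \<in> E. x \<notin> e}" using nc a(4) by (simp add: is_cutpoint_def)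
  then obtain p where p: "is_walk (V - {x}) {e \<in> E. x \<notin> e} p" "hd p = a" "last p = b"
    using a b unfolding connected_graph_def by blast
  obtain q where q: "is_walk (V - {x}) {e \<in> E. x \<notin> e} q" "distinct q" "hd q = a" "last q = b"
    using walk_distinct[OF p(1)] p by auto
  have qne: "q \<noteq> []" using q(1) by (simp add: is_walk_def)
  then obtain q' where q': "q = a # q'" using q(3) by (cases q) auto
  have q'ne: "q' \<noteq> []" using q' q(4) ab by auto
  have xq: "x \<notin> set q" using q(1) by (auto simp: is_walk_def)
  have wq: "is_walk V E q" using q(1) by (rule walk_mono) auto
  have wc: "is_walk V E (x # q)" unfolding q' walk_cons2 using a wq q' e1 by simp
  have "length (x # q) \<ge> 3" using q' q'ne by (cases q') auto
  moreover have "{last (x # q), hd (x # q)} \<in> E" using q(4) qne b e2 by (simp add: insert_commute)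
  moreover have "distinct (x # q)" using q(2) xq by simp
  ultimately have "has_cycle V E" using wc unfolding has_cycle_def by blast
  then show False using T by (simp add: is_tree_def)
qed

lemma edge_has_cut:
  assumes T: "is_tree V E" and V3: "card V \<ge> 3" and e: "e \<in> E"
  shows "\<exists>c\<in>e. is_cutpoint V E c"
proof (rule ccontr)
  assume nc: "\<not> (\<exists>c\<in>e. is_cutpoint V E c)"
  have sg: "simple_graph V E" using T by (simp add: is_tree_def)
  obtain u v where uv: "e = {u, v}" "u \<noteq> v" "u \<in> V" "v \<in> V" using sg e by (auto simp: simple_graph_def)
  have onlyu: "e' = e" if "e' \<in> E" "u \<in> e'" for e'
    using tree_deg2_cut[OF T e that(1) _ _ that(2)] nc uv by auto
  have onlyv: "e' = e" if "e' \<in> E" "v \<in> e'" for e'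
    using tree_deg2_cut[OF T e that(1) _ _ that(2)] nc uv by auto
  have fV: "finite V" using T by (simp add: is_tree_def)
  obtain w where w: "w \<in> V" "w \<notin> {u, v}"
  proof (rule ccontr)
    assume "\<not> thesis"
    then have "V \<subseteq> {u, v}" using that by blast
    then have "card V \<le> card {u, v}" by (rule card_mono[rotated]) simp
    also have "\<dots> \<le> 2" by (simp add: card_insert_if)
    finally show False using V3 by simp
  qed
  obtain p where p: "is_walk V E p" "hd p = u" "last p = w"
    using T uv w unfolding is_tree_def connected_graph_def by blast
  have pne: "p \<noteq> []" using p(1) by (simp add: is_walk_def)
  have all: "i < length p \<longrightarrow> p ! i \<in> {u, v}" for i
  proof (induct i)
    case 0 then show ?case using p(2) pne by (simp add: hd_conv_nth)
  next
    case (Suc i)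
    show ?case
    proof
      assume si: "Suc i < length p"
      then have ed: "{p ! i, p ! Suc i} \<in> E" using p(1) by (simp add: is_walk_def)
      have "p ! i \<in> {u, v}" using Suc si by simp
      then have "{p ! i, p ! Suc i} = e" using onlyu[OF ed] onlyv[OF ed] by auto
      then show "p ! Suc i \<in> {u, v}" using uv by auto
    qed
  qed
  have "last p \<in> {u, v}" using all[of "length p - 1"] pne by (simp add: last_conv_nth)
  then show False using p(3) w by simp
qed

lemma finite_edges: "is_tree V E \<Longrightarrow> finite E"
proof -
  assume T: "is_tree V E"
  then have "E \<subseteq> Pow V" by (auto simp: is_tree_def simple_graph_def)
  moreover have "finite V" using T by (simp add: is_tree_def)
  ultimately show "finite E" by (meson finite_Pow_iff finite_subset)
qed

lemma cut_leaf:
  assumes C: "is_caterpillar V E" and c: "is_cutpoint V E c" and d: "degree E c \<ge> 3"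
  shows "\<exists>l. {c, l} \<in> E \<and> degree E l = 1 \<and> l \<noteq> c"
proof -
  have T: "is_tree V E" using C by (simp add: is_caterpillar_def)
  have sg: "simple_graph V E" using T by (simp add: is_tree_def)
  have fE: "finite E" using finite_edges[OF T] .
  define V' where "V' = {v \<in> V. degree E v \<noteq> 1}"
  have "is_chordless_path V' {e \<in> E. e \<subseteq> V'}" using C by (simp add: is_caterpillar_def V'_def Let_def)
  then obtain p where p: "distinct p" "set p = V'" "{e \<in> E. e \<subseteq> V'} = {{p ! i, p ! Suc i} | i. Suc i < length p}"
    unfolding is_chordless_path_def by blast
  have cV: "c \<in> V" using c by (simp add: is_cutpoint_def)
  have cV': "c \<in> V'" using cV d by (simp add: V'_def)
  then obtain k where k: "k < length p" "p ! k = c" using p(2) by (auto simp: in_set_conv_nth)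
  have "\<exists>e\<in>E. c \<in> e \<and> \<not> e \<subseteq> V'"
  proof (rule ccontr)
    assume "\<not> ?thesis"
    then have sub: "{e \<in> E. c \<in> e} \<subseteq> {{p ! k, p ! Suc k}, {p ! (k - 1), p ! k}}"
    proof (intro subsetI)
      fix e assume all: "\<not> (\<exists>e\<in>E. c \<in> e \<and> \<not> e \<subseteq> V')" and e: "e \<in> {e \<in> E. c \<in> e}"
      then have "e \<in> {e \<in> E. e \<subseteq> V'}" by auto
      then obtain i where i: "e = {p ! i, p ! Suc i}" "Suc i < length p" using p(3) by auto
      have "c = p ! i \<or> c = p ! Suc i" using e i by auto
      then show "e \<in> {{p ! k, p ! Suc k}, {p ! (k - 1), p ! k}}"
      proof
        assume "c = p ! i"
        then have "i = k" using k p(1) i(2) nth_eq_iff_index_eq by fastforce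
        then show ?thesis using i by simp
      next
        assume "c = p ! Suc i"
        then have "Suc i = k" using k p(1) i(2) nth_eq_iff_index_eq by fastforce
        then show ?thesis using i by auto
      qed
    qed
    have "card {e \<in> E. c \<in> e} \<le> card {{p ! k, p ! Suc k}, {p ! (k - 1), p ! k}}"
      by (rule card_mono[OF _ sub]) simp
    also have "\<dots> \<le> 2" by (simp add: card_insert_if)
    finally show False using d by (simp add: degree_def)
  qed
  then obtain e where e: "e \<in> E" "c \<in> e" "\<not> e \<subseteq> V'" by blast
  obtain l where l: "e = {c, l}" "l \<noteq> c" "l \<in> V" using simple_edge[OF sg e(1,2)] by blast
  have "l \<notin> V'" using e(3) l(1) cV' by auto
  then have "degree E l = 1" using l(3) by (simp add: V'_def)
  then show ?thesis using l e by blast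
qed



lemma gen_ideal_gens: "G \<subseteq> gen_ideal S G"
  unfolding gen_ideal_def by blast

lemma gen_ideal_least: "ideal_in S J \<Longrightarrow> G \<subseteq> J \<Longrightarrow> gen_ideal S G \<subseteq> J"
  unfolding gen_ideal_def by blast

lemma keys_pvar: "Poly_Mapping.keys (pvar x :: ('x,'k::comm_ring_1) mpoly) = {Poly_Mapping.single x 1}"
  by (simp add: pvar_def)

lemma VI_mono: "A \<subseteq> B \<Longrightarrow> VI X A \<subseteq> VI X B"
  unfolding VI_def by blast

lemma pvar_VI: "x \<in> X \<Longrightarrow> (pvar x :: ('x,'k::comm_ring_1) mpoly) \<in> VI X A \<longleftrightarrow> x \<in> A"
  by (auto simp: VI_def keys_pvar pr_pvar)

lemma pvar_prod_VI:
  assumes "f \<in> X" "g \<in> X" "f \<noteq> g" "f \<in> A \<or> g \<in> A"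
  shows "(pvar f * pvar g :: ('x,'k::comm_ring_1) mpoly) \<in> VI X A"
proof -
  have eq: "(pvar f * pvar g :: ('x,'k) mpoly) = Poly_Mapping.single (Poly_Mapping.single f 1 + Poly_Mapping.single g 1) 1"
    by (simp add: pvar_def mult_single)
  have k: "Poly_Mapping.keys (Poly_Mapping.single f (1::nat) + Poly_Mapping.single g 1) = {f, g}"
    by (simp add: keys_add_nat insert_commute)
  show ?thesis unfolding eq VI_def using assms k by (auto intro!: pr_single)
qed

theorem main_result:
  fixes V :: "'v set" and E :: "'v set set"
  assumes cat: "is_caterpillar V E"
    and V3: "card V \<ge> 3"
    and deg: "\<forall>v. is_cutpoint V E v \<longrightarrow> degree E v \<ge> 3"
  shows "krull_dim_quot (poly_ring E :: ('v set, 'k::field) mpoly set)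
           (line_graph_edge_ideal E)
         = enat (card {v. is_cutpoint V E v})"
proof -
  have T: "is_tree V E" using cat by (simp add: is_caterpillar_def)
  have fV: "finite V" using T by (simp add: is_tree_def)
  have fE: "finite E" using finite_edges[OF T] .
  define Cut where "Cut = {v. is_cutpoint V E v}"
  have fCut: "finite Cut" unfolding Cut_def using fV
    by (rule finite_subset[rotated]) (auto simp: is_cutpoint_def)
  define S where "S = (poly_ring E :: ('v set, 'k) mpoly set)"
  define G where "G = {pvar f * pvar g :: ('v set, 'k) mpoly | f g. f \<in> E \<and> g \<in> E \<and> f \<noteq> g \<and> f \<inter> g \<noteq> {}}"
  have I_def': "(line_graph_edge_ideal E :: ('v set, 'k) mpoly set) = gen_ideal S G"
    unfolding line_graph_edge_ideal_def S_def G_def by simp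
  define Ns where "Ns = {n. \<exists>P :: nat \<Rightarrow> ('v set, 'k) mpoly set.
       (\<forall>i\<le>n. prime_ideal_in S (P i) \<and> gen_ideal S G \<subseteq> P i) \<and> (\<forall>i<n. P i \<subset> P (Suc i))}"
  have kd: "krull_dim_quot S (gen_ideal S G) = Sup (enat ` Ns)"
    unfolding krull_dim_quot_def Ns_def by simp
  have upper: "n \<le> card Cut" if n: "n \<in> Ns" for n
  proof -
    obtain P :: "nat \<Rightarrow> ('v set, 'k) mpoly set" where
      Pp: "\<forall>i\<le>n. prime_ideal_in S (P i) \<and> gen_ideal S G \<subseteq> P i" and Pc: "\<forall>i<n. P i \<subset> P (Suc i)"
      using n unfolding Ns_def by blast
    define F where "F = {f \<in> E. pvar f \<notin> P 0}"
    have P0: "prime_ideal_in S (P 0)" "gen_ideal S G \<subseteq> P 0" using Pp by auto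
    have "n \<le> card F"
      by (rule chain_bound[of E F n P]) (use fE Pp Pc in \<open>auto simp: F_def S_def\<close>)
    also have "card F \<le> card Cut"
    proof -
      have ex: "\<exists>c. c \<in> f \<and> c \<in> Cut" if "f \<in> F" for f
        using edge_has_cut[OF T V3, of f] that by (auto simp: F_def Cut_def)
      define h where "h f = (SOME c. c \<in> f \<and> c \<in> Cut)" for f
      have h: "h f \<in> f \<and> h f \<in> Cut" if "f \<in> F" for f
        unfolding h_def using someI_ex[OF ex[OF that]] .
      have "inj_on h F"
      proof (rule inj_onI, rule ccontr)
        fix f g assume f: "f \<in> F" and g: "g \<in> F" and eq: "h f = h g" and ne: "f \<noteq> g"
        have "f \<inter> g \<noteq> {}" using h[OF f] h[OF g] eq by auto
        then have "pvar f * pvar g \<in> G" using f g ne unfolding G_def F_def by blast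
        then have "pvar f * pvar g \<in> P 0" using gen_ideal_gens[of G S] P0(2) by blast
        moreover have "pvar f \<in> S" "pvar g \<in> S" using f g unfolding F_def S_def by (auto intro: pr_pvar)
        ultimately have "pvar f \<in> P 0 \<or> pvar g \<in> P 0" using P0(1) unfolding prime_ideal_in_def by blast
        then show False using f g unfolding F_def by blast
      qed
      moreover have "h ` F \<subseteq> Cut" using h by blast
      ultimately show ?thesis using fCut by (rule card_inj_on_le)
    qed
    finally show ?thesis .
  qed
  have lf_ex: "\<exists>l. {c, l} \<in> E \<and> degree E l = 1 \<and> l \<noteq> c" if "c \<in> Cut" for c
    using cut_leaf[OF cat] deg that unfolding Cut_def by blast
  define lf where "lf c = (SOME l. {c, l} \<in> E \<and> degree E l = 1 \<and> l \<noteq> c)" for c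
  have lf: "{c, lf c} \<in> E \<and> degree E (lf c) = 1 \<and> lf c \<noteq> c" if "c \<in> Cut" for c
    unfolding lf_def using someI_ex[OF lf_ex[OF that]] .
  define me where "me c = {c, lf c}" for c
  have disj: "me c \<inter> me c' = {}" if c: "c \<in> Cut" and c': "c' \<in> Cut" and ne: "c \<noteq> c'" for c c'
  proof -
    have dc: "degree E c \<ge> 3" "degree E c' \<ge> 3" using deg c c' unfolding Cut_def by auto
    have l1: "lf c \<noteq> c'" using lf[OF c] dc by auto
    have l2: "lf c' \<noteq> c" using lf[OF c'] dc by auto
    have l3: "lf c \<noteq> lf c'"
    proof
      assume leq: "lf c = lf c'"
      define l where "l = lf c"
      have "card {e \<in> E. l \<in> e} = 1" using lf[OF c] unfolding l_def degree_def by simp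
      then obtain e0 where e0: "{e \<in> E. l \<in> e} = {e0}" by (rule card_1_singletonE)
      have "{c, l} \<in> {e \<in> E. l \<in> e}" "{c', l} \<in> {e \<in> E. l \<in> e}" using lf[OF c] lf[OF c'] leq l_def by auto
      then have "{c, l} = {c', l}" using e0 by auto
      then have "c = c'" using lf[OF c] lf[OF c'] leq l_def by (auto simp: doubleton_eq_iff)
      then show False using ne by simp
    qed
    show ?thesis unfolding me_def using ne l1 l2 l3 by auto
  qed
  obtain cs where cs: "distinct cs" "set cs = Cut" using finite_distinct_list[OF fCut] by blast
  define s where "s = length cs"
  have s_card: "s = card Cut" unfolding s_def using cs distinct_card[of cs] by simp
  have csC: "cs ! i \<in> Cut" if "i < s" for i using cs that s_def by auto
  define A where "A j = E - {me (cs ! i) | i. j \<le> i \<and> i < s}" for j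
  define Pc where "Pc j = (VI E (A j) :: ('v set, 'k) mpoly set)" for j
  have meE: "me (cs ! i) \<in> E" if "i < s" for i using lf[OF csC[OF that]] by (simp add: me_def)
  have me_ne: "me (cs ! i) \<noteq> me (cs ! i')" if "i < s" "i' < s" "i \<noteq> i'" for i i'
  proof -
    have "cs ! i \<noteq> cs ! i'" using cs(1) that unfolding s_def by (simp add: nth_eq_iff_index_eq)
    then have "me (cs ! i) \<inter> me (cs ! i') = {}" by (rule disj[OF csC[OF that(1)] csC[OF that(2)]])
    then show ?thesis by (auto simp: me_def)
  qed
  have "s \<in> Ns"
    unfolding Ns_def
  proof (intro CollectI exI conjI allI impI)
    fix i assume i: "i \<le> s"
    show "prime_ideal_in S (Pc i)" unfolding Pc_def S_def by (rule VI_prime[OF fE])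
    show "gen_ideal S G \<subseteq> Pc i"
    proof (rule gen_ideal_least)
      show "ideal_in S (Pc i)" unfolding Pc_def S_def by (rule VI_ideal)
      show "G \<subseteq> Pc i"
      proof
        fix y assume "y \<in> G"
        then obtain f g where y: "y = pvar f * pvar g" and fg: "f \<in> E" "g \<in> E" "f \<noteq> g" "f \<inter> g \<noteq> {}"
          unfolding G_def by blast
        have "f \<in> A i \<or> g \<in> A i"
        proof (rule ccontr)
          assume "\<not> (f \<in> A i \<or> g \<in> A i)"
          then obtain k k' where k: "f = me (cs ! k)" "k < s" and k': "g = me (cs ! k')" "k' < s"
            using fg unfolding A_def by blast
          have "k \<noteq> k'" using k k' fg by auto
          then have "cs ! k \<noteq> cs ! k'" using cs(1) k k' unfolding s_def by (simp add: nth_eq_iff_index_eq)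
          then have "f \<inter> g = {}" using disj[OF csC[OF k(2)] csC[OF k'(2)]] k k' by simp
          then show False using fg by simp
        qed
        then show "y \<in> Pc i" unfolding y Pc_def by (rule pvar_prod_VI[OF fg(1,2,3)])
      qed
    qed
  next
    fix j assume j: "j < s"
    have sub: "A j \<subseteq> A (Suc j)" unfolding A_def by auto
    have notin: "me (cs ! j) \<notin> A j" unfolding A_def using j by auto
    have isin: "me (cs ! j) \<in> A (Suc j)"
      unfolding A_def using meE[OF j] me_ne j by auto
    have "pvar (me (cs ! j)) \<in> Pc (Suc j)" "pvar (me (cs ! j)) \<notin> Pc j"
      unfolding Pc_def using pvar_VI[OF meE[OF j]] isin notin by auto
    then show "Pc j \<subset> Pc (Suc j)" using VI_mono[OF sub] unfolding Pc_def by blast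
  qed
  have "Sup (enat ` Ns) = enat s"
  proof (rule Sup_eqI)
    show "\<And>y. y \<in> enat ` Ns \<Longrightarrow> y \<le> enat s" using upper s_card by auto
    show "\<And>y. (\<And>z. z \<in> enat ` Ns \<Longrightarrow> z \<le> y) \<Longrightarrow> enat s \<le> y" using \<open>s \<in> Ns\<close> by blast
  qed
  then show ?thesis using kd I_def' s_card unfolding S_def Cut_def by simp
qed


theorem proposition3p6:
  fixes V :: "'v set" and E :: "'v set set"
  assumes "is_caterpillar V E"
    and "card V \<ge> 3"
    and "\<forall>v. is_cutpoint V E v \<longrightarrow> degree E v \<ge> 3"
  shows "krull_dim_quot (poly_ring E :: ('v set, 'k::field) mpoly set)
           (line_graph_edge_ideal E)
         = enat (card {v. is_cutpoint V E v})"
  using main_result[OF assms] .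

end
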